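(* Let $(W,S)$ be the Weyl group and set of simple reflections of a complex semisimple algebraic group. Suppose $\mathbf s=(s_1,\ldots,s_q)$ is a tuple of elements of $S$ with $H_{s_1}\cdots H_{s_q}=H_w$, where $w\in W$ is fully commutative, and suppose $q>l(w)$. Then there exist $i<j$ such that $s_i=s_j$ and $s_i$ commutes with $s_k$ for every $k$ with $i<k<j$.
   Context: The $0$-Hecke algebra has basis $H_u$ ($u\in W$), $H_1$ the identity, and $H_sH_u=H_{su}$ if $l(su)>l(u)$, $H_sH_u=H_u$ if $l(su)<l(u)$ ($s\in S$). An element $w\in W$ is fully commutative if any reduced expression for $w$ can be obtained from any other by using only the relations $st=ts$ for commuting $s,t\in S$. *)

theory Defs
  imports "HOL-Analysis.Analysis"
begin

definition reflection :: "'a::euclidean_space \<Rightarrow> 'a \<Rightarrow> 'a" where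
  "reflection \<alpha> v = v - (2 * (v \<bullet> \<alpha>) / (\<alpha> \<bullet> \<alpha>)) *\<^sub>R \<alpha>"

definition root_system :: "'a::euclidean_space set \<Rightarrow> bool" where
  "root_system \<Phi> \<longleftrightarrow> finite \<Phi> \<and> 0 \<notin> \<Phi> \<and>
     (\<forall>\<alpha>\<in>\<Phi>. reflection \<alpha> ` \<Phi> = \<Phi>) \<and>
     (\<forall>\<alpha>\<in>\<Phi>. \<forall>\<beta>\<in>\<Phi>. 2 * (\<beta> \<bullet> \<alpha>) / (\<alpha> \<bullet> \<alpha>) \<in> \<int>) \<and>
     (\<forall>\<alpha>\<in>\<Phi>. \<forall>c::real. c *\<^sub>R \<alpha> \<in> \<Phi> \<longrightarrow> c = 1 \<or> c = -1)"

definition is_base :: "'a::euclidean_space set \<Rightarrow> 'a set \<Rightarrow> bool" where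
  "is_base \<Phi> \<Delta> \<longleftrightarrow> \<Delta> \<subseteq> \<Phi> \<and> independent \<Delta> \<and>
     (\<forall>\<beta>\<in>\<Phi>. \<exists>c::'a \<Rightarrow> int.
        ((\<forall>\<alpha>\<in>\<Delta>. c \<alpha> \<ge> 0) \<or> (\<forall>\<alpha>\<in>\<Delta>. c \<alpha> \<le> 0)) \<and>
        \<beta> = (\<Sum>\<alpha>\<in>\<Delta>. of_int (c \<alpha>) *\<^sub>R \<alpha>))"

definition word_prod :: "('a \<Rightarrow> 'a) list \<Rightarrow> 'a \<Rightarrow> 'a" where
  "word_prod ws = foldr (\<circ>) ws id"

definition weyl_group :: "'a::euclidean_space set \<Rightarrow> ('a \<Rightarrow> 'a) set" where
  "weyl_group \<Phi> = {word_prod ws | ws. set ws \<subseteq> reflection ` \<Phi>}"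

definition simple_reflections :: "'a::euclidean_space set \<Rightarrow> ('a \<Rightarrow> 'a) set" where
  "simple_reflections \<Delta> = reflection ` \<Delta>"

definition wlen :: "('a \<Rightarrow> 'a) set \<Rightarrow> ('a \<Rightarrow> 'a) \<Rightarrow> nat" where
  "wlen S w = (LEAST n. \<exists>ws. set ws \<subseteq> S \<and> length ws = n \<and> word_prod ws = w)"

text \<open>Product H_{s_1} ... H_{s_q} in the 0-Hecke algebra, which is H_u for the
  element u computed here (H_s H_u = H_{su} if l(su) > l(u), else H_u).\<close>
fun hecke_prod :: "('a \<Rightarrow> 'a) set \<Rightarrow> ('a \<Rightarrow> 'a) list \<Rightarrow> ('a \<Rightarrow> 'a)" where
  "hecke_prod S [] = id"
| "hecke_prod S (s # xs) =
     (if wlen S (s \<circ> hecke_prod S xs) > wlen S (hecke_prod S xs)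
      then s \<circ> hecke_prod S xs else hecke_prod S xs)"

definition reduced_word :: "('a \<Rightarrow> 'a) set \<Rightarrow> ('a \<Rightarrow> 'a) \<Rightarrow> ('a \<Rightarrow> 'a) list \<Rightarrow> bool" where
  "reduced_word S w ws \<longleftrightarrow> set ws \<subseteq> S \<and> word_prod ws = w \<and> length ws = wlen S w"

definition comm_move :: "('a \<Rightarrow> 'a) list rel" where
  "comm_move = {(xs @ [s, t] @ ys, xs @ [t, s] @ ys) | xs ys s t. s \<circ> t = t \<circ> s}"

definition fully_commutative :: "('a \<Rightarrow> 'a) set \<Rightarrow> ('a \<Rightarrow> 'a) \<Rightarrow> bool" where
  "fully_commutative S w \<longleftrightarrow>
     (\<forall>a b. reduced_word S w a \<longrightarrow> reduced_word S w b \<longrightarrow> (a, b) \<in> comm_move\<^sup>*)"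

end

theory Submission
  imports Defs
begin


lemma word_prod_Nil[simp]: "word_prod [] = id" by (simp add: word_prod_def)
lemma word_prod_Cons[simp]: "word_prod (s#ws) = s \<circ> word_prod ws" by (simp add: word_prod_def)
lemma word_prod_append: "word_prod (a@b) = word_prod a \<circ> word_prod b"
  by (induction a) (simp_all add: comp_assoc)

lemma wlen_le: "set ws \<subseteq> S \<Longrightarrow> wlen S (word_prod ws) \<le> length ws"
  unfolding wlen_def by (rule Least_le) blast

lemma wlen_ex: "set ws \<subseteq> S \<Longrightarrow> \<exists>ws'. set ws' \<subseteq> S \<and> length ws' = wlen S (word_prod ws) \<and> word_prod ws' = word_prod ws"
  unfolding wlen_def
  using LeastI[of "\<lambda>n. \<exists>ws'. set ws' \<subseteq> S \<and> length ws' = n \<and> word_prod ws' = word_prod ws" "length ws"]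
  by blast

lemma wlen_Suc_le: "set ws \<subseteq> S \<Longrightarrow> s \<in> S \<Longrightarrow> wlen S (s \<circ> word_prod ws) \<le> wlen S (word_prod ws) + 1"
proof -
  assume a: "set ws \<subseteq> S" "s \<in> S"
  obtain ws' where w: "set ws' \<subseteq> S" "length ws' = wlen S (word_prod ws)" "word_prod ws' = word_prod ws"
    using wlen_ex[OF a(1)] by blast
  have "s \<circ> word_prod ws = word_prod (s # ws')" using w by simp
  moreover have "wlen S (word_prod (s # ws')) \<le> length (s # ws')" using w a by (intro wlen_le) auto
  ultimately show ?thesis using w by simp
qed

lemma hecke_word: "set xs \<subseteq> S \<Longrightarrow> \<exists>ws. set ws \<subseteq> S \<and> hecke_prod S xs = word_prod ws"
proof (induction xs)
  case Nil then show ?case by (intro exI[of _ "[]"]) simp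
next
  case (Cons s xs)
  then obtain ws where ws: "set ws \<subseteq> S" "hecke_prod S xs = word_prod ws" by auto
  show ?case
  proof (cases "wlen S (s \<circ> hecke_prod S xs) > wlen S (hecke_prod S xs)")
    case True
    then have "hecke_prod S (s # xs) = word_prod (s # ws)" using ws by simp
    then show ?thesis using ws Cons.prems by (intro exI[of _ "s # ws"]) simp
  next
    case False
    then have "hecke_prod S (s # xs) = word_prod ws" using ws by simp
    then show ?thesis using ws by blast
  qed
qed

lemma hecke_split:
  assumes "set xs \<subseteq> S"
  shows "(hecke_prod S xs = word_prod xs \<and> wlen S (word_prod xs) = length xs) \<or>
     (\<exists>p c b. xs = p @ c # b \<and> hecke_prod S b = word_prod b \<and> wlen S (word_prod b) = length b \<and>
        \<not> wlen S (c \<circ> word_prod b) > wlen S (word_prod b))"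
  using assms
proof (induction xs)
  case Nil
  have "wlen S (word_prod []) = 0" using wlen_le[of "[]" S] by simp
  then show ?case by (simp add: id_def)
next
  case (Cons s xs)
  have "set xs \<subseteq> S" using Cons.prems by simp
  note IH = Cons.IH[OF this]
  show ?case
  proof (cases "\<exists>p c b. xs = p @ c # b \<and> hecke_prod S b = word_prod b \<and> wlen S (word_prod b) = length b \<and>
        \<not> wlen S (c \<circ> word_prod b) > wlen S (word_prod b)")
    case True
    then obtain p c b where "xs = p @ c # b \<and> hecke_prod S b = word_prod b \<and> wlen S (word_prod b) = length b \<and>
        \<not> wlen S (c \<circ> word_prod b) > wlen S (word_prod b)" by blast
    moreover have "s # xs = (s # p) @ c # b" using calculation by simp
    ultimately show ?thesis by blast
  next
    case False
    with IH have h: "hecke_prod S xs = word_prod xs" "wlen S (word_prod xs) = length xs" by blast+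
    show ?thesis
    proof (cases "wlen S (s \<circ> word_prod xs) > wlen S (word_prod xs)")
      case True
      have "wlen S (s \<circ> word_prod xs) \<le> wlen S (word_prod xs) + 1"
        using Cons.prems by (intro wlen_Suc_le) auto
      then have "wlen S (word_prod (s # xs)) = length (s # xs)" using True h by simp
      moreover have "hecke_prod S (s # xs) = word_prod (s # xs)" using True h by simp
      ultimately show ?thesis by blast
    next
      case F2: False
      have "s # xs = [] @ s # xs" by simp
      with h F2 show ?thesis by blast
    qed
  qed
qed

lemma hecke_append:
  assumes "set p \<subseteq> S" "set b \<subseteq> S"
  shows "\<exists>x. set x \<subseteq> S \<and> hecke_prod S (p @ b) = word_prod x \<circ> hecke_prod S b \<and>
           wlen S (hecke_prod S (p @ b)) = length x + wlen S (hecke_prod S b)"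
  using assms(1)
proof (induction p)
  case Nil
  show ?case
  proof (rule exI[of _ "[]"], intro conjI)
    show "hecke_prod S ([] @ b) = word_prod [] \<circ> hecke_prod S b"
      by (simp only: append_Nil word_prod_Nil id_comp)
    show "wlen S (hecke_prod S ([] @ b)) = length [] + wlen S (hecke_prod S b)"
      by (simp only: append_Nil list.size(3) add_0)
    show "set [] \<subseteq> S" by simp
  qed
next
  case (Cons s p)
  have pS: "set p \<subseteq> S" and sS: "s \<in> S" using Cons.prems by simp_all
  from Cons.IH[OF pS] obtain x where xP: "set x \<subseteq> S \<and> hecke_prod S (p @ b) = word_prod x \<circ> hecke_prod S b \<and>
           wlen S (hecke_prod S (p @ b)) = length x + wlen S (hecke_prod S b)" by (rule exE)
  have x1: "set x \<subseteq> S" using xP by (rule conjunct1)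
  have x2: "hecke_prod S (p @ b) = word_prod x \<circ> hecke_prod S b" using xP by (elim conjE)
  have x3: "wlen S (hecke_prod S (p @ b)) = length x + wlen S (hecke_prod S b)" using xP by (elim conjE)
  have "set (p @ b) \<subseteq> S" using pS assms(2) by simp
  from hecke_word[OF this] obtain ws where wsP: "set ws \<subseteq> S \<and> hecke_prod S (p @ b) = word_prod ws" by (rule exE)
  have ws1: "set ws \<subseteq> S" using wsP by (rule conjunct1)
  have ws2: "hecke_prod S (p @ b) = word_prod ws" using wsP by (rule conjunct2)
  show ?case
  proof (cases "wlen S (s \<circ> hecke_prod S (p @ b)) > wlen S (hecke_prod S (p @ b))")
    case True
    have h: "hecke_prod S ((s # p) @ b) = s \<circ> hecke_prod S (p @ b)"
      using True by (simp only: append_Cons hecke_prod.simps if_True)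
    have le: "wlen S (s \<circ> hecke_prod S (p @ b)) \<le> wlen S (hecke_prod S (p @ b)) + 1"
      unfolding ws2 by (rule wlen_Suc_le[OF ws1 sS])
    show ?thesis
    proof (rule exI[of _ "s # x"], intro conjI)
      show "set (s # x) \<subseteq> S" using x1 sS by simp
      show "hecke_prod S ((s # p) @ b) = word_prod (s # x) \<circ> hecke_prod S b"
        unfolding h x2 word_prod_Cons by (rule comp_assoc[symmetric])
      have "wlen S (hecke_prod S ((s # p) @ b)) = wlen S (hecke_prod S (p @ b)) + 1"
        unfolding h using le True by linarith
      then show "wlen S (hecke_prod S ((s # p) @ b)) = length (s # x) + wlen S (hecke_prod S b)"
        using x3 by simp
    qed
  next
    case False
    have e: "hecke_prod S ((s # p) @ b) = hecke_prod S (p @ b)"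
      using False by (simp only: append_Cons hecke_prod.simps if_False)
    show ?thesis unfolding e
    proof (rule exI[of _ x], intro conjI)
      show "set x \<subseteq> S" by (rule x1)
      show "hecke_prod S (p @ b) = word_prod x \<circ> hecke_prod S b" by (rule x2)
      show "wlen S (hecke_prod S (p @ b)) = length x + wlen S (hecke_prod S b)" by (rule x3)
    qed
  qed
qed

lemma mset_comm: "(u, v) \<in> comm_move\<^sup>* \<Longrightarrow> mset u = mset v"
proof (induction rule: rtrancl_induct)
  case base then show ?case by simp
next
  case (step y z)
  then show ?case unfolding comm_move_def by (auto simp: add_mset_commute)
qed

lemma filter_comm_move:
  assumes "(u, v) \<in> comm_move\<^sup>*" "c \<circ> d \<noteq> d \<circ> c"
  shows "filter (\<lambda>z. z = c \<or> z = d) u = filter (\<lambda>z. z = c \<or> z = d) v"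
  using assms(1)
proof (induction rule: rtrancl_induct)
  case base then show ?case by simp
next
  case (step y z)
  from step(2) obtain xs ys s t where y: "y = xs @ [s, t] @ ys" and z: "z = xs @ [t, s] @ ys"
    and st: "s \<circ> t = t \<circ> s" unfolding comm_move_def by blast
  have "\<not> ((s = c \<and> t = d) \<or> (s = d \<and> t = c))"
  proof
    assume "(s = c \<and> t = d) \<or> (s = d \<and> t = c)"
    then have "c \<circ> d = d \<circ> c" using st by auto
    then show False using assms(2) by blast
  qed
  then have F: "filter (\<lambda>z. z = c \<or> z = d) [s,t] = filter (\<lambda>z. z = c \<or> z = d) [t,s]"
    by auto
  have "filter (\<lambda>z. z = c \<or> z = d) y = filter (\<lambda>z. z = c \<or> z = d) z"
    unfolding y z filter_append F by (rule refl)
  then show ?case using step(3) by simp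
qed

lemma comm_first:
  assumes "(x @ c # y, x @ b) \<in> comm_move\<^sup>*"
  shows "\<exists>j<length b. b ! j = c \<and> (\<forall>k<j. c \<circ> b ! k = b ! k \<circ> c)"
proof -
  have "mset (x @ c # y) = mset (x @ b)" using assms by (rule mset_comm)
  then have "mset (c # y) = mset b" by simp
  then have "set_mset (mset (c # y)) = set_mset (mset b)" by (rule arg_cong)
  then have sb: "set (c # y) = set b" by (simp only: set_mset_mset)
  have "c \<in> set (c # y)" by (rule list.set_intros(1))
  then have "c \<in> set b" using sb by (simp only:)
  from split_list_first[OF this] obtain b1 b2 where b: "b = b1 @ c # b2" and nc: "c \<notin> set b1"
    by blast
  have "\<forall>k<length b1. c \<circ> b1 ! k = b1 ! k \<circ> c"
  proof (rule ccontr)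
    assume "\<not> ?thesis"
    then obtain k where k: "k < length b1" "c \<circ> b1 ! k \<noteq> b1 ! k \<circ> c" by blast
    define d where "d = b1 ! k"
    have dm: "d \<in> set b1" using k d_def by simp
    define P where "P = (\<lambda>z. z = c \<or> z = d)"
    have eq: "filter P (x @ c # y) = filter P (x @ b)"
      unfolding P_def by (rule filter_comm_move[OF assms]) (use k d_def in auto)
    obtain r where r: "filter P b1 = d # r"
    proof (cases "filter P b1")
      case Nil
      have "P d" unfolding P_def by simp
      then have False using dm Nil by (metis filter_empty_conv)
      then show ?thesis ..
    next
      case (Cons e r)
      then have "e \<in> set (filter P b1)" by simp
      then have "e = d" using nc unfolding P_def by auto
      then show ?thesis using Cons that by simp
    qed
    have "filter P (x @ c # y) = filter P x @ c # filter P y" unfolding P_def by simp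
    moreover have "filter P (x @ b) = filter P x @ d # r @ filter P (c # b2)" using r b by simp
    ultimately have "c = d" using eq by simp
    then show False using k d_def by simp
  qed
  note cm = this
  show ?thesis
  proof (rule exI[of _ "length b1"], intro conjI)
    show "length b1 < length b" using b by simp
    show "b ! length b1 = c" unfolding b by (rule nth_append_length)
    show "\<forall>k<length b1. c \<circ> b ! k = b ! k \<circ> c"
    proof (intro allI impI)
      fix k assume kl: "k < length b1"
      have e: "b ! k = b1 ! k" unfolding b using kl by (rule nth_append_left)
      show "c \<circ> b ! k = b ! k \<circ> c" unfolding e by (rule cm[rule_format, OF kl])
    qed
  qed
qed



lemma reflection_linear: "linear (reflection a)"
proof (rule linearI)
  fix x y show "reflection a (x + y) = reflection a x + reflection a y"
    by (simp add: reflection_def inner_add_left add_divide_distrib distrib_left scaleR_add_left algebra_simps)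
next
  fix c :: real and x show "reflection a (c *\<^sub>R x) = c *\<^sub>R reflection a x"
    by (simp add: reflection_def inner_scaleR_left scaleR_diff_right scaleR_scaleR mult.left_commute)
qed

lemma reflection_self: "a \<noteq> 0 \<Longrightarrow> reflection a a = - a"
  by (simp add: reflection_def scaleR_2)

lemma reflection_inner: "a \<noteq> 0 \<Longrightarrow> reflection a v \<bullet> a = - (v \<bullet> a)"
  by (simp add: reflection_def inner_diff_left)

lemma reflection_invol: "a \<noteq> 0 \<Longrightarrow> reflection a (reflection a v) = v"
proof -
  assume a: "a \<noteq> 0"
  have "reflection a (reflection a v) = reflection a v - (2 * (reflection a v \<bullet> a) / (a \<bullet> a)) *\<^sub>R a"
    by (rule reflection_def)
  also have "\<dots> = v" using a by (simp add: reflection_inner) (simp add: reflection_def)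
  finally show ?thesis .
qed

lemma reflection_neg: "reflection a (- v) = - reflection a v"
  using reflection_linear linear_neg by blast


context
  fixes \<Phi> \<Delta> :: "'a::euclidean_space set"
  assumes rs: "root_system \<Phi>" and base: "is_base \<Phi> \<Delta>"
begin

lemma fin_Phi: "finite \<Phi>" using rs root_system_def by blast
lemma Delta_sub: "\<Delta> \<subseteq> \<Phi>" using base is_base_def by blast
lemma fin_Delta: "finite \<Delta>" using fin_Phi Delta_sub finite_subset by blast
lemma indep: "independent \<Delta>" using base is_base_def by blast
lemma Phi_nz: "\<alpha> \<in> \<Phi> \<Longrightarrow> \<alpha> \<noteq> 0" using rs root_system_def by metis
lemma refl_Phi: "\<alpha> \<in> \<Phi> \<Longrightarrow> \<beta> \<in> \<Phi> \<Longrightarrow> reflection \<alpha> \<beta> \<in> \<Phi>"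
  using rs unfolding root_system_def by blast
lemma refl_image: "\<alpha> \<in> \<Phi> \<Longrightarrow> reflection \<alpha> ` \<Phi> = \<Phi>"
  using rs unfolding root_system_def by blast
lemma neg_Phi: "\<beta> \<in> \<Phi> \<Longrightarrow> - \<beta> \<in> \<Phi>"
  using refl_Phi[of \<beta> \<beta>] reflection_self Phi_nz by metis
lemma reduced: "\<alpha> \<in> \<Phi> \<Longrightarrow> c *\<^sub>R \<alpha> \<in> \<Phi> \<Longrightarrow> c = 1 \<or> c = -1"
  using rs unfolding root_system_def by blast
lemma coef: "\<beta> \<in> \<Phi> \<Longrightarrow> \<exists>c::'a \<Rightarrow> int. ((\<forall>\<alpha>\<in>\<Delta>. c \<alpha> \<ge> 0) \<or> (\<forall>\<alpha>\<in>\<Delta>. c \<alpha> \<le> 0)) \<and>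
     \<beta> = (\<Sum>\<alpha>\<in>\<Delta>. of_int (c \<alpha>) *\<^sub>R \<alpha>)"
  using base unfolding is_base_def by blast

definition ff :: "'a \<Rightarrow> real" where "ff = (SOME g. linear g \<and> (\<forall>x\<in>\<Delta>. g x = 1))"

lemma ff: "linear ff \<and> (\<forall>x\<in>\<Delta>. ff x = 1)"
proof -
  have "\<exists>g. linear g \<and> (\<forall>x\<in>\<Delta>. g x = (1::real))"
    by (rule real_vector.linear_independent_extend[OF indep])
  from someI_ex[OF this] show ?thesis unfolding ff_def .
qed

lemma ff_lin: "linear ff" using ff by blast
lemma ff_one: "\<alpha> \<in> \<Delta> \<Longrightarrow> ff \<alpha> = 1" using ff by blast
lemma ff_neg: "ff (- x) = - ff x" using ff_lin linear_neg by blast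

lemma ff_sum: "ff (\<Sum>\<alpha>\<in>\<Delta>. of_int (c \<alpha>) *\<^sub>R \<alpha>) = (\<Sum>\<alpha>\<in>\<Delta>. of_int (c \<alpha>))"
  by (simp add: real_vector.linear_sum[OF ff_lin] linear_cmul[OF ff_lin] ff_one)

lemma coef_pos:
  assumes "\<beta> \<in> \<Phi>" "\<beta> = (\<Sum>\<alpha>\<in>\<Delta>. of_int (c \<alpha>) *\<^sub>R \<alpha>)" "\<forall>\<alpha>\<in>\<Delta>. c \<alpha> \<ge> 0"
  shows "ff \<beta> > 0"
proof -
  have ge: "ff \<beta> \<ge> 0" using assms(2,3) ff_sum by (simp add: sum_nonneg)
  show ?thesis
  proof (rule ccontr)
    assume "\<not> ff \<beta> > 0"
    then have "(\<Sum>\<alpha>\<in>\<Delta>. (of_int (c \<alpha>) :: real)) = 0" using ge assms(2) ff_sum by simp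
    then have "\<forall>\<alpha>\<in>\<Delta>. (of_int (c \<alpha>) :: real) = 0"
      using sum_nonneg_eq_0_iff[OF fin_Delta, of "\<lambda>\<alpha>. (of_int (c \<alpha>) :: real)"] assms(3) by simp
    then have "\<beta> = 0" using assms(2) by simp
    then show False using Phi_nz assms(1) by blast
  qed
qed

lemma coef_neg:
  assumes "\<beta> \<in> \<Phi>" "\<beta> = (\<Sum>\<alpha>\<in>\<Delta>. of_int (c \<alpha>) *\<^sub>R \<alpha>)" "\<forall>\<alpha>\<in>\<Delta>. c \<alpha> \<le> 0"
  shows "ff \<beta> < 0"
proof -
  have e: "- \<beta> = (\<Sum>\<alpha>\<in>\<Delta>. of_int (- c \<alpha>) *\<^sub>R \<alpha>)"
    using assms(2) by (simp add: sum_negf[symmetric])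
  have "ff (- \<beta>) > 0" by (rule coef_pos[OF neg_Phi[OF assms(1)] e]) (use assms(3) in simp)
  then show ?thesis using ff_neg by simp
qed

lemma ff_nz: assumes "\<beta> \<in> \<Phi>" shows "ff \<beta> \<noteq> 0"
proof -
  obtain c where c: "(\<forall>\<alpha>\<in>\<Delta>. c \<alpha> \<ge> 0) \<or> (\<forall>\<alpha>\<in>\<Delta>. c \<alpha> \<le> 0)"
    "\<beta> = (\<Sum>\<alpha>\<in>\<Delta>. of_int (c \<alpha>) *\<^sub>R \<alpha>)" using coef[OF assms] by blast
  show ?thesis using c(1)
  proof
    assume "\<forall>\<alpha>\<in>\<Delta>. c \<alpha> \<ge> 0" then show ?thesis using coef_pos[OF assms c(2)] by simp
  next
    assume "\<forall>\<alpha>\<in>\<Delta>. c \<alpha> \<le> 0" then show ?thesis using coef_neg[OF assms c(2)] by simp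
  qed
qed

lemma key:
  assumes a: "\<alpha> \<in> \<Delta>" and b: "\<beta> \<in> \<Phi>" and pos: "ff \<beta> > 0" and ne: "\<beta> \<noteq> \<alpha>"
  shows "ff (reflection \<alpha> \<beta>) > 0"
proof (rule ccontr)
  assume nf: "\<not> ff (reflection \<alpha> \<beta>) > 0"
  have aP: "\<alpha> \<in> \<Phi>" using a Delta_sub by blast
  define \<gamma> where "\<gamma> = reflection \<alpha> \<beta>"
  have gP: "\<gamma> \<in> \<Phi>" unfolding \<gamma>_def using refl_Phi aP b by blast
  have gn: "ff \<gamma> < 0" using nf ff_nz[OF gP] unfolding \<gamma>_def by linarith
  obtain c where c: "(\<forall>\<alpha>\<in>\<Delta>. c \<alpha> \<ge> 0) \<or> (\<forall>\<alpha>\<in>\<Delta>. c \<alpha> \<le> 0)"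
    "\<beta> = (\<Sum>\<alpha>\<in>\<Delta>. of_int (c \<alpha>) *\<^sub>R \<alpha>)" using coef[OF b] by blast
  have cpos: "\<forall>\<alpha>\<in>\<Delta>. c \<alpha> \<ge> 0"
  proof (rule ccontr)
    assume "\<not> (\<forall>\<alpha>\<in>\<Delta>. c \<alpha> \<ge> 0)"
    then have "\<forall>\<alpha>\<in>\<Delta>. c \<alpha> \<le> 0" using c(1) by blast
    then have "ff \<beta> < 0" by (rule coef_neg[OF b c(2)])
    then show False using pos by simp
  qed
  obtain d where d: "(\<forall>\<alpha>\<in>\<Delta>. d \<alpha> \<ge> 0) \<or> (\<forall>\<alpha>\<in>\<Delta>. d \<alpha> \<le> 0)"
    "\<gamma> = (\<Sum>\<alpha>\<in>\<Delta>. of_int (d \<alpha>) *\<^sub>R \<alpha>)" using coef[OF gP] by blast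
  have dneg: "\<forall>\<alpha>\<in>\<Delta>. d \<alpha> \<le> 0"
  proof (rule ccontr)
    assume "\<not> (\<forall>\<alpha>\<in>\<Delta>. d \<alpha> \<le> 0)"
    then have "\<forall>\<alpha>\<in>\<Delta>. d \<alpha> \<ge> 0" using d(1) by blast
    then have "ff \<gamma> > 0" by (rule coef_pos[OF gP d(2)])
    then show False using gn by simp
  qed
  define k where "k = 2 * (\<beta> \<bullet> \<alpha>) / (\<alpha> \<bullet> \<alpha>)"
  have g: "\<gamma> = \<beta> - k *\<^sub>R \<alpha>" unfolding \<gamma>_def k_def reflection_def by simp
  have delta: "(\<Sum>\<delta>\<in>\<Delta>. (if \<delta> = \<alpha> then k else 0) *\<^sub>R \<delta>) = k *\<^sub>R \<alpha>"
  proof -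
    have "(\<Sum>\<delta>\<in>\<Delta>. (if \<delta> = \<alpha> then k else 0) *\<^sub>R \<delta>) = (\<Sum>\<delta>\<in>\<Delta>. if \<delta> = \<alpha> then k *\<^sub>R \<alpha> else 0)"
      by (rule sum.cong) auto
    also have "\<dots> = k *\<^sub>R \<alpha>" using sum.delta[OF fin_Delta, of \<alpha> "\<lambda>_. k *\<^sub>R \<alpha>"] a by simp
    finally show ?thesis .
  qed
  have "(\<Sum>\<delta>\<in>\<Delta>. (of_int (c \<delta>) - of_int (d \<delta>) - (if \<delta> = \<alpha> then k else 0)) *\<^sub>R \<delta>)
      = (\<Sum>\<delta>\<in>\<Delta>. of_int (c \<delta>) *\<^sub>R \<delta>) - (\<Sum>\<delta>\<in>\<Delta>. of_int (d \<delta>) *\<^sub>R \<delta>)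
        - (\<Sum>\<delta>\<in>\<Delta>. (if \<delta> = \<alpha> then k else 0) *\<^sub>R \<delta>)"
    by (simp add: scaleR_diff_left sum_subtractf)
  also have "\<dots> = 0" by (simp add: c(2)[symmetric] d(2)[symmetric] g delta)
  finally have z: "(\<Sum>\<delta>\<in>\<Delta>. (of_int (c \<delta>) - of_int (d \<delta>) - (if \<delta> = \<alpha> then k else 0)) *\<^sub>R \<delta>) = 0" .
  have coefz: "\<forall>\<delta>\<in>\<Delta>. (of_int (c \<delta>) - of_int (d \<delta>) - (if \<delta> = \<alpha> then k else 0)) = (0::real)"
  proof
    fix \<delta> assume dD: "\<delta> \<in> \<Delta>"
    from indep have "\<forall>c. (\<Sum>v\<in>\<Delta>. c v *\<^sub>R v) = 0 \<longrightarrow> (\<forall>v\<in>\<Delta>. c v = 0)"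
      unfolding independent_explicit by (rule conjunct2)
    from this[rule_format, OF z dD]
    show "(of_int (c \<delta>) - of_int (d \<delta>) - (if \<delta> = \<alpha> then k else 0)) = (0::real)" .
  qed
  have c0: "\<forall>\<delta>\<in>\<Delta>. \<delta> \<noteq> \<alpha> \<longrightarrow> c \<delta> = 0"
  proof (intro ballI impI)
    fix \<delta> assume "\<delta> \<in> \<Delta>" "\<delta> \<noteq> \<alpha>"
    then have "of_int (c \<delta>) - of_int (d \<delta>) - (if \<delta> = \<alpha> then k else 0) = (0::real)"
      using coefz by blast
    then have "c \<delta> = d \<delta>" using \<open>\<delta> \<noteq> \<alpha>\<close> by simp
    then show "c \<delta> = 0" using cpos dneg \<open>\<delta> \<in> \<Delta>\<close> by force
  qed
  have "\<beta> = (\<Sum>\<delta>\<in>\<Delta>. if \<delta> = \<alpha> then of_int (c \<alpha>) *\<^sub>R \<alpha> else 0)"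
    unfolding c(2) by (rule sum.cong) (use c0 in auto)
  also have "\<dots> = of_int (c \<alpha>) *\<^sub>R \<alpha>" using sum.delta[OF fin_Delta, of \<alpha> "\<lambda>_. of_int (c \<alpha>) *\<^sub>R \<alpha>"] a by simp
  finally have bc: "\<beta> = of_int (c \<alpha>) *\<^sub>R \<alpha>" .
  then have "(of_int (c \<alpha>) :: real) *\<^sub>R \<alpha> \<in> \<Phi>" using b by (simp only:)
  then have "(of_int (c \<alpha>) :: real) = 1 \<or> (of_int (c \<alpha>) :: real) = -1" by (rule reduced[OF aP])
  then show False
  proof
    assume "(of_int (c \<alpha>) :: real) = 1" then show False using bc ne by simp
  next
    assume "(of_int (c \<alpha>) :: real) = -1"
    then have "\<beta> = - \<alpha>" using bc by simp
    then show False using pos ff_neg ff_one[OF a] by simp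
  qed
qed

lemma key2:
  assumes a: "\<alpha> \<in> \<Delta>" and g: "\<gamma> \<in> \<Phi>" and ne: "\<gamma> \<noteq> \<alpha>" "\<gamma> \<noteq> - \<alpha>"
  shows "ff (reflection \<alpha> \<gamma>) > 0 \<longleftrightarrow> ff \<gamma> > 0"
proof (cases "ff \<gamma> > 0")
  case True then show ?thesis using key a g ne by blast
next
  case False
  then have "ff (- \<gamma>) > 0" using ff_nz[OF g] ff_neg by fastforce
  moreover have "- \<gamma> \<noteq> \<alpha>" using ne by auto
  ultimately have "ff (reflection \<alpha> (- \<gamma>)) > 0" using key a neg_Phi[OF g] by blast
  moreover have "reflection \<alpha> (- \<gamma>) = - reflection \<alpha> \<gamma>" by (rule reflection_neg)
  moreover have "ff (- reflection \<alpha> \<gamma>) = - ff (reflection \<alpha> \<gamma>)" by (rule ff_neg)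
  ultimately have "ff (reflection \<alpha> \<gamma>) < 0" by simp
  then show ?thesis using False by simp
qed

definition good :: "('a \<Rightarrow> 'a) \<Rightarrow> bool" where
  "good w \<longleftrightarrow> linear w \<and> inj w \<and> w ` \<Phi> = \<Phi>"

definition NN :: "('a \<Rightarrow> 'a) \<Rightarrow> nat" where
  "NN w = card {\<beta>\<in>\<Phi>. ff \<beta> > 0 \<and> ff (w \<beta>) < 0}"

lemma good_id: "good id" unfolding good_def by (simp add: linear_id)

lemma good_step: assumes "good w" "\<alpha> \<in> \<Delta>" shows "good (reflection \<alpha> \<circ> w)"
proof -
  have aP: "\<alpha> \<in> \<Phi>" using assms Delta_sub by blast
  have "inj (reflection \<alpha>)" unfolding inj_def using reflection_invol Phi_nz[OF aP] by metis
  moreover have "linear (reflection \<alpha> \<circ> w)"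
    using assms(1) reflection_linear linear_compose unfolding good_def by blast
  moreover have "(reflection \<alpha> \<circ> w) ` \<Phi> = reflection \<alpha> ` (w ` \<Phi>)" by (rule image_comp[symmetric])
  then have "(reflection \<alpha> \<circ> w) ` \<Phi> = \<Phi>"
    using assms(1) refl_image[OF aP] unfolding good_def by simp
  ultimately show ?thesis using assms(1) unfolding good_def by (simp add: inj_compose)
qed

lemma NN_step:
  assumes gw: "good w" and a: "\<alpha> \<in> \<Delta>"
  shows "NN (reflection \<alpha> \<circ> w) = Suc (NN w) \<or> NN w = Suc (NN (reflection \<alpha> \<circ> w))"
proof -
  let ?s = "reflection \<alpha>"
  have aP: "\<alpha> \<in> \<Phi>" using a Delta_sub by blast
  have lin: "linear w" and inj: "inj w" and im: "w ` \<Phi> = \<Phi>" using gw unfolding good_def by auto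
  obtain x where xP: "x \<in> \<Phi>" and wx: "w x = \<alpha>" using aP im by (metis imageE)
  have nxP: "- x \<in> \<Phi>" using neg_Phi xP by blast
  have wnx: "w (- x) = - \<alpha>" using lin linear_neg wx by metis
  have sa: "?s \<alpha> = - \<alpha>" using reflection_self Phi_nz[OF aP] by blast
  have "?s (- \<alpha>) = - ?s \<alpha>" by (rule reflection_neg)
  then have sna: "?s (- \<alpha>) = \<alpha>" using sa by simp
  have fa: "ff \<alpha> = 1" using ff_one a by blast
  have fna: "ff (- \<alpha>) = -1" using fa ff_neg by simp
  define A where "A = {\<beta>\<in>\<Phi>. ff \<beta> > 0 \<and> ff (w \<beta>) < 0}"
  define B where "B = {\<beta>\<in>\<Phi>. ff \<beta> > 0 \<and> ff ((?s \<circ> w) \<beta>) < 0}"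
  have finA: "finite A" unfolding A_def using fin_Phi by simp
  have finB: "finite B" unfolding B_def using fin_Phi by simp
  have same: "\<beta> \<in> A \<longleftrightarrow> \<beta> \<in> B" if "\<beta> \<in> \<Phi>" "\<beta> \<noteq> x" "\<beta> \<noteq> - x" for \<beta>
  proof -
    have wb: "w \<beta> \<in> \<Phi>" using that im by blast
    have n1: "w \<beta> \<noteq> \<alpha>" using that wx inj unfolding inj_def by metis
    have n2: "w \<beta> \<noteq> - \<alpha>" using that wnx inj unfolding inj_def by metis
    have "ff (?s (w \<beta>)) > 0 \<longleftrightarrow> ff (w \<beta>) > 0" using key2[OF a wb n1 n2] .
    moreover have "ff (?s (w \<beta>)) \<noteq> 0" using ff_nz refl_Phi[OF aP wb] by blast
    moreover have "ff (w \<beta>) \<noteq> 0" using ff_nz wb by blast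
    ultimately have "ff (?s (w \<beta>)) < 0 \<longleftrightarrow> ff (w \<beta>) < 0" by linarith
    then show ?thesis unfolding A_def B_def by simp
  qed
  have AP: "A \<subseteq> \<Phi>" "B \<subseteq> \<Phi>" unfolding A_def B_def by auto
  have fx: "ff x \<noteq> 0" using ff_nz xP by blast
  show ?thesis
  proof (cases "ff x > 0")
    case True
    have xB: "x \<in> B" unfolding B_def using xP True wx sa fna by simp
    have xA: "x \<notin> A" unfolding A_def using wx fa by simp
    have nx: "- x \<notin> A" "- x \<notin> B" unfolding A_def B_def using True ff_neg by auto
    have "B = insert x A"
    proof (rule set_eqI)
      fix y show "y \<in> B \<longleftrightarrow> y \<in> insert x A"
        using same[of y] xB nx AP by (cases "y = x"; cases "y = - x"; cases "y \<in> \<Phi>") auto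
    qed
    then have "card B = Suc (card A)" using finA xA by simp
    then show ?thesis unfolding NN_def A_def B_def by simp
  next
    case False
    then have fxn: "ff x < 0" using fx by linarith
    have xA: "- x \<in> A" unfolding A_def using nxP fxn wnx fna ff_neg by simp
    have xB: "- x \<notin> B" unfolding B_def using wnx sna fa by simp
    have nx: "x \<notin> A" "x \<notin> B" unfolding A_def B_def using fxn by auto
    have "A = insert (- x) B"
    proof (rule set_eqI)
      fix y show "y \<in> A \<longleftrightarrow> y \<in> insert (- x) B"
        using same[of y] xA nx AP by (cases "y = x"; cases "y = - x"; cases "y \<in> \<Phi>") auto
    qed
    then have "card A = Suc (card B)" using finB xB by simp
    then show ?thesis unfolding NN_def A_def B_def by simp
  qed
qed

lemma word_good:
  "set ws \<subseteq> simple_reflections \<Delta> \<Longrightarrow> good (word_prod ws) \<and> (even (NN (word_prod ws)) \<longleftrightarrow> even (length ws))"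
proof (induction ws)
  case Nil
  have "NN id = 0" unfolding NN_def by (simp add: card_eq_0_iff)
  then show ?case using good_id by (simp add: id_def)
next
  case (Cons s ws)
  then have IH: "good (word_prod ws)" "even (NN (word_prod ws)) \<longleftrightarrow> even (length ws)" by auto
  obtain \<alpha> where a: "\<alpha> \<in> \<Delta>" "s = reflection \<alpha>" using Cons.prems unfolding simple_reflections_def by auto
  have "good (s \<circ> word_prod ws)" using good_step[OF IH(1) a(1)] a by simp
  moreover have "even (NN (s \<circ> word_prod ws)) \<longleftrightarrow> \<not> even (NN (word_prod ws))"
    using NN_step[OF IH(1) a(1)] a by auto
  ultimately show ?case using IH(2) by (simp add: comp_def)
qed

lemma wlen_ne:
  assumes "set ws \<subseteq> simple_reflections \<Delta>" "s \<in> simple_reflections \<Delta>"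
  shows "wlen (simple_reflections \<Delta>) (s \<circ> word_prod ws) \<noteq> wlen (simple_reflections \<Delta>) (word_prod ws)"
proof -
  let ?S = "simple_reflections \<Delta>"
  obtain w1 where w1: "set w1 \<subseteq> ?S" "length w1 = wlen ?S (word_prod ws)" "word_prod w1 = word_prod ws"
    using wlen_ex[OF assms(1)] by blast
  have "set (s # ws) \<subseteq> ?S" using assms by simp
  from wlen_ex[OF this] obtain w2 where w2: "set w2 \<subseteq> ?S" "length w2 = wlen ?S (word_prod (s # ws))"
    "word_prod w2 = word_prod (s # ws)" by blast
  have "even (length w1) \<longleftrightarrow> even (length ws)"
    using word_good[OF w1(1)] word_good[OF assms(1)] w1(3) by simp
  moreover have "even (length w2) \<longleftrightarrow> even (length (s # ws))"
    using word_good[OF w2(1)] word_good[OF \<open>set (s # ws) \<subseteq> ?S\<close>] w2(3) by simp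
  ultimately show ?thesis using w1(2) w2(2) by auto
qed

lemma simple_invol: "s \<in> simple_reflections \<Delta> \<Longrightarrow> s \<circ> s = id"
proof -
  assume "s \<in> simple_reflections \<Delta>"
  then obtain \<alpha> where "\<alpha> \<in> \<Delta>" "s = reflection \<alpha>" unfolding simple_reflections_def by auto
  moreover have "\<alpha> \<noteq> 0" using calculation Phi_nz Delta_sub by blast
  ultimately show ?thesis by (simp add: fun_eq_iff reflection_invol)
qed

end

theorem proposition3p4:
  fixes \<Phi> \<Delta> :: "'a::euclidean_space set" and ss :: "('a \<Rightarrow> 'a) list" and w :: "'a \<Rightarrow> 'a"
  assumes "root_system \<Phi>" and "is_base \<Phi> \<Delta>"
    and "set ss \<subseteq> simple_reflections \<Delta>"
    and "w \<in> weyl_group \<Phi>"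
    and "hecke_prod (simple_reflections \<Delta>) ss = w"
    and "fully_commutative (simple_reflections \<Delta>) w"
    and "length ss > wlen (simple_reflections \<Delta>) w"
  shows "\<exists>i j. i < j \<and> j < length ss \<and> ss ! i = ss ! j \<and>
           (\<forall>k. i < k \<and> k < j \<longrightarrow> ss ! i \<circ> ss ! k = ss ! k \<circ> ss ! i)"
proof -
  let ?S = "simple_reflections \<Delta>"
  note rs = assms(1) and bs = assms(2)
  have ss: "set ss \<subseteq> ?S" by (rule assms(3))
  have nonred: "\<not> (hecke_prod ?S ss = word_prod ss \<and> wlen ?S (word_prod ss) = length ss)"
  proof
    assume h: "hecke_prod ?S ss = word_prod ss \<and> wlen ?S (word_prod ss) = length ss"
    then have "word_prod ss = w" using assms(5) by simp
    then have "wlen ?S w = length ss" using h by simp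
    then show False using assms(7) by simp
  qed
  obtain p c b where pcb: "ss = p @ c # b" and hb: "hecke_prod ?S b = word_prod b"
     and lb: "wlen ?S (word_prod b) = length b"
     and na: "\<not> wlen ?S (c \<circ> word_prod b) > wlen ?S (word_prod b)"
    using hecke_split[OF ss] nonred by blast
  have pS: "set p \<subseteq> ?S" and cS: "c \<in> ?S" and bS: "set b \<subseteq> ?S" using ss pcb by auto
  define u where "u = word_prod b"
  have hcb: "hecke_prod ?S (c # b) = u" using hb na unfolding u_def by simp
  have cb: "set (c # b) \<subseteq> ?S" using cS bS by simp
  from hecke_append[OF pS cb] obtain x where x: "set x \<subseteq> ?S"
     "hecke_prod ?S (p @ c # b) = word_prod x \<circ> hecke_prod ?S (c # b)"
     "wlen ?S (hecke_prod ?S (p @ c # b)) = length x + wlen ?S (hecke_prod ?S (c # b))" by blast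
  have w0: "w = hecke_prod ?S (p @ c # b)" using assms(5) pcb by simp
  have wx: "w = word_prod x \<circ> u" unfolding w0 by (simp only: x(2) hcb)
  have lw: "wlen ?S w = length x + wlen ?S u" unfolding w0 by (simp only: x(3) hcb)
  have cu_le: "wlen ?S (c \<circ> u) \<le> wlen ?S u" using na unfolding u_def by simp
  have cu_ne: "wlen ?S (c \<circ> u) \<noteq> wlen ?S u" unfolding u_def by (rule wlen_ne[OF rs bs bS cS])
  obtain y where y: "set y \<subseteq> ?S" "length y = wlen ?S (word_prod (c # b))" "word_prod y = word_prod (c # b)"
    using wlen_ex[OF cb] by blast
  have cc: "c \<circ> c = id" by (rule simple_invol[OF rs bs cS])
  have ycu: "word_prod y = c \<circ> u" using y(3) unfolding u_def by simp
  have ly: "length y = wlen ?S (c \<circ> u)" using y(2) unfolding u_def by simp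
  have "word_prod (c # y) = c \<circ> (c \<circ> u)" using ycu by simp
  also have "\<dots> = (c \<circ> c) \<circ> u" by (simp only: comp_assoc)
  also have "\<dots> = u" using cc by simp
  finally have ucy: "word_prod (c # y) = u" .
  have cyS: "set (c # y) \<subseteq> ?S" using y(1) cS by simp
  have "wlen ?S u \<le> length (c # y)" using wlen_le[OF cyS] ucy by simp
  then have lcy: "length (c # y) = wlen ?S u" using ly cu_le cu_ne by simp
  have red1: "reduced_word ?S w (x @ c # y)"
    unfolding reduced_word_def
  proof (intro conjI)
    show "set (x @ c # y) \<subseteq> ?S" using x(1) cyS by simp
    show "word_prod (x @ c # y) = w" using ucy wx by (simp add: word_prod_append)
    show "length (x @ c # y) = wlen ?S w" using lcy lw by simp
  qed
  have red2: "reduced_word ?S w (x @ b)"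
    unfolding reduced_word_def
  proof (intro conjI)
    show "set (x @ b) \<subseteq> ?S" using x(1) bS by simp
    show "word_prod (x @ b) = w" using wx unfolding u_def by (simp add: word_prod_append)
    show "length (x @ b) = wlen ?S w" using lb lw unfolding u_def by simp
  qed
  have "(x @ c # y, x @ b) \<in> comm_move\<^sup>*"
    using assms(6) red1 red2 unfolding fully_commutative_def by blast
  from comm_first[OF this] obtain j where j: "j < length b" "b ! j = c"
    "\<forall>k<j. c \<circ> b ! k = b ! k \<circ> c" by blast
  have i1: "ss ! length p = c" using pcb by (simp add: nth_append)
  have i2: "ss ! (length p + Suc j) = c" using pcb j by (simp add: nth_append)
  have i3: "length p + Suc j < length ss" using pcb j by simp
  have i4: "\<forall>k. length p < k \<and> k < length p + Suc j \<longrightarrow> ss ! length p \<circ> ss ! k = ss ! k \<circ> ss ! length p"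
  proof (intro allI impI)
    fix k assume k: "length p < k \<and> k < length p + Suc j"
    define m where "m = k - length p - 1"
    have m: "k = length p + Suc m" "m < j" using k unfolding m_def by arith+
    have "ss ! k = b ! m" using pcb m by (simp add: nth_append)
    then show "ss ! length p \<circ> ss ! k = ss ! k \<circ> ss ! length p" using i1 j(3) m(2) by simp
  qed
  have i0: "length p < length p + Suc j" by simp
  have i5: "ss ! length p = ss ! (length p + Suc j)" using i1 i2 by simp
  show ?thesis
    apply (rule exI[of _ "length p"], rule exI[of _ "length p + Suc j"])
    apply (intro conjI)
       apply (fact i0)
      apply (fact i3)
     apply (fact i5)
    apply (fact i4)
    done
qed

end
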